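(* Regard $\phi_0(a,\beta_0,r,\mu)=1-\dfrac{(a\beta_0-\sqrt r)^2}{a\mu+r}$ as a smooth function of positive parameters $a,\beta_0,r,\mu$. For every parameter value $(A,r,\beta_0,a,\mu)\in(0,\infty)^5$ satisfying $$a\beta_0<\sqrt r,\qquad \phi_0<\frac{\beta_0A}{\mu+\frac ra}<1,\qquad \beta_0<1,$$ one has $$\frac{\partial\phi_0}{\partial a}>0,\qquad \frac{\partial\phi_0}{\partial \beta_0}>0,\qquad \frac{\partial\phi_0}{\partial \mu}>0,\qquad \frac{\partial\phi_0}{\partial r}<0.$$ *)

theory Defs
  imports "HOL-Analysis.Analysis"
begin

definition phi0 :: "real \<Rightarrow> real \<Rightarrow> real \<Rightarrow> real \<Rightarrow> real" where
  "phi0 a \<beta>0 r \<mu> = 1 - (a * \<beta>0 - sqrt r)\<^sup>2 / (a * \<mu> + r)"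

end

theory Submission
  imports Defs
begin

lemma Dne_aux: assumes "(a::real)>0" "\<mu>>0" "r>0" shows "a*\<mu>+r \<noteq> 0"
  using assms by (smt (verit) mult_pos_pos)

lemma d1_aux: assumes "a>0" "\<mu>>0" "r>0" shows "((\<lambda>x. phi0 x b r \<mu>) has_real_derivative
      (\<mu> * (a * b - sqrt r)\<^sup>2 - 2 * b * (a * b - sqrt r) * (a*\<mu>+r)) / (a*\<mu>+r)\<^sup>2) (at a)"
proof -
  have Dne: "a*\<mu>+r \<noteq> 0" using Dne_aux assms by blast
  show ?thesis
  unfolding phi0_def
  apply (rule DERIV_cong)
   apply (rule DERIV_real_sqrt derivative_eq_intros refl Dne assms)+
  using Dne assms by (simp add: divide_simps power2_eq_square; simp add: algebra_simps)
qed

lemma d2_aux: assumes "a>0" "\<mu>>0" "r>0" shows "((\<lambda>x. phi0 a x r \<mu>) has_real_derivative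
      - 2 * a * (a * b - sqrt r) / (a*\<mu>+r)) (at b)"
proof -
  have Dne: "a*\<mu>+r \<noteq> 0" using Dne_aux assms by blast
  show ?thesis
  unfolding phi0_def
  apply (rule DERIV_cong)
   apply (rule DERIV_real_sqrt derivative_eq_intros refl Dne assms)+
  using Dne assms by (simp add: divide_simps power2_eq_square; simp add: algebra_simps)
qed

lemma d3_aux: assumes "a>0" "\<mu>>0" "r>0" shows "((\<lambda>x. phi0 a b r x) has_real_derivative
      a * (a * b - sqrt r)\<^sup>2 / (a*\<mu>+r)\<^sup>2) (at \<mu>)"
proof -
  have Dne: "a*\<mu>+r \<noteq> 0" using Dne_aux assms by blast
  show ?thesis
  unfolding phi0_def
  apply (rule DERIV_cong)
   apply (rule DERIV_real_sqrt derivative_eq_intros refl Dne assms)+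
  using Dne assms by (simp add: divide_simps power2_eq_square; simp add: algebra_simps)
qed

lemma d4_aux: assumes "a>0" "\<mu>>0" "r>0" shows "((\<lambda>x. phi0 a b x \<mu>) has_real_derivative
      ((a * b - sqrt r)\<^sup>2 - (sqrt r - a * b) / sqrt r * (a*\<mu>+r)) / (a*\<mu>+r)\<^sup>2) (at r)"
proof -
  have Dne: "a*\<mu>+r \<noteq> 0" using Dne_aux assms by blast
  show ?thesis
  unfolding phi0_def
  apply (rule DERIV_cong)
   apply (rule DERIV_real_sqrt derivative_eq_intros refl Dne assms)+
  using Dne assms by (simp add: divide_simps power2_eq_square; simp add: algebra_simps)
qed

theorem lemma5p5:
  fixes A r \<beta>0 a \<mu> :: real
  assumes "A > 0" "r > 0" "\<beta>0 > 0" "a > 0" "\<mu> > 0"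
    and "a * \<beta>0 < sqrt r"
    and "phi0 a \<beta>0 r \<mu> < \<beta>0 * A / (\<mu> + r / a)"
    and "\<beta>0 * A / (\<mu> + r / a) < 1"
    and "\<beta>0 < 1"
  shows "deriv (\<lambda>x. phi0 x \<beta>0 r \<mu>) a > 0
    \<and> deriv (\<lambda>x. phi0 a x r \<mu>) \<beta>0 > 0
    \<and> deriv (\<lambda>x. phi0 a \<beta>0 r x) \<mu> > 0
    \<and> deriv (\<lambda>x. phi0 a \<beta>0 x \<mu>) r < 0"
proof -
  define s where "s = sqrt r"
  define D where "D = a * \<mu> + r"
  have s0: "s > 0" using assms s_def by simp
  have ss: "s * s = r" using assms s_def by simp
  have D0: "D > 0" using assms D_def by (simp add: add_pos_pos)
  have neg: "a * \<beta>0 - s < 0" using assms s_def by simp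
  have N0: "(a * \<beta>0 - s)\<^sup>2 > 0" using neg by simp
  note d1 = d1_aux[OF assms(4,5,2), of \<beta>0, folded s_def D_def]
  note d2 = d2_aux[OF assms(4,5,2), of \<beta>0, folded s_def D_def]
  note d3 = d3_aux[OF assms(4,5,2), of \<beta>0, folded s_def D_def]
  note d4 = d4_aux[OF assms(4,5,2), of \<beta>0, folded s_def D_def]
  have p1: "(\<mu> * (a * \<beta>0 - s)\<^sup>2 - 2 * \<beta>0 * (a * \<beta>0 - s) * D) / D\<^sup>2 > 0"
  proof -
    have "- 2 * \<beta>0 * (a * \<beta>0 - s) * D > 0"
    proof -
      have "\<beta>0 * (a * \<beta>0 - s) < 0" using neg assms by (simp add: mult_pos_neg)
      hence "D * (\<beta>0 * (a * \<beta>0 - s)) < 0" using D0 by (simp add: mult_pos_neg)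
      thus ?thesis by simp
    qed
    moreover have "\<mu> * (a * \<beta>0 - s)\<^sup>2 > 0" using N0 assms by simp
    ultimately have "\<mu> * (a * \<beta>0 - s)\<^sup>2 - 2 * \<beta>0 * (a * \<beta>0 - s) * D > 0"
      by (simp add: algebra_simps)
    thus ?thesis using D0 by simp
  qed
  have p2: "- 2 * a * (a * \<beta>0 - s) / D > 0"
  proof -
    have "a * (a * \<beta>0 - s) < 0" using neg assms by (simp add: mult_pos_neg)
    hence "2 * a * (a * \<beta>0 - s) / D < 0" using D0 by (simp add: divide_neg_pos)
    thus ?thesis by simp
  qed
  have p3: "a * (a * \<beta>0 - s)\<^sup>2 / D\<^sup>2 > 0" using N0 assms D0 by simp
  have p4: "((a * \<beta>0 - s)\<^sup>2 - (s - a * \<beta>0) / s * D) / D\<^sup>2 < 0"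
  proof -
    have "s * (s - a * \<beta>0) < D" unfolding D_def using ss assms s0
      by (smt (verit) mult_pos_pos right_diff_distrib)
    hence "s * (s - a * \<beta>0) * (s - a * \<beta>0) < D * (s - a * \<beta>0)"
      using neg by (simp add: mult_strict_right_mono)
    hence "(a * \<beta>0 - s)\<^sup>2 < (s - a * \<beta>0) / s * D" using s0
      by (simp add: field_simps power2_eq_square)
    thus ?thesis using D0 by (simp add: divide_neg_pos)
  qed
  show ?thesis
    using DERIV_imp_deriv[OF d1] DERIV_imp_deriv[OF d2] DERIV_imp_deriv[OF d3] DERIV_imp_deriv[OF d4]
      p1 p2 p3 p4 by simp
qed

end
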